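(* Let $G$ be a regular simple graph on $n$ vertices that is isomorphic neither to the empty graph $E_n$ (no edges) nor to the complete graph $K_n$. Then for every integer $k$ with $2\le k\le n-2$, the token graph $F_k(G)$ is non-regular.
   Context: For a simple graph $G=(V,E)$ on $n$ vertices and an integer $1\le k<n$, the $k$-token graph $F_k(G)$ is the graph whose vertices are all $k$-element subsets of $V$, two such subsets $A,B$ being adjacent whenever their symmetric difference $A\triangle B$ is a pair $\{a,b\}$ with $a$ adjacent to $b$ in $G$. *)

theory Defs
  imports Main
begin

definition simple_graph :: "'a set \<Rightarrow> ('a \<Rightarrow> 'a \<Rightarrow> bool) \<Rightarrow> bool" where
  "simple_graph V E \<longleftrightarrow> finite V \<and> (\<forall>x y. E x y \<longrightarrow> x \<in> V \<and> y \<in> V) \<and>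
     (\<forall>x y. E x y \<longrightarrow> E y x) \<and> (\<forall>x. \<not> E x x)"

definition degree :: "'a set \<Rightarrow> ('a \<Rightarrow> 'a \<Rightarrow> bool) \<Rightarrow> 'a \<Rightarrow> nat" where
  "degree V E v = card {w \<in> V. E v w}"

definition regular :: "'a set \<Rightarrow> ('a \<Rightarrow> 'a \<Rightarrow> bool) \<Rightarrow> bool" where
  "regular V E \<longleftrightarrow> (\<exists>d. \<forall>v\<in>V. degree V E v = d)"

definition edgeless :: "'a set \<Rightarrow> ('a \<Rightarrow> 'a \<Rightarrow> bool) \<Rightarrow> bool" where
  "edgeless V E \<longleftrightarrow> (\<forall>x\<in>V. \<forall>y\<in>V. \<not> E x y)"

definition complete :: "'a set \<Rightarrow> ('a \<Rightarrow> 'a \<Rightarrow> bool) \<Rightarrow> bool" where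
  "complete V E \<longleftrightarrow> (\<forall>x\<in>V. \<forall>y\<in>V. x \<noteq> y \<longrightarrow> E x y)"

definition token_vertices :: "'a set \<Rightarrow> nat \<Rightarrow> 'a set set" where
  "token_vertices V k = {A. A \<subseteq> V \<and> card A = k}"

definition token_adj :: "('a \<Rightarrow> 'a \<Rightarrow> bool) \<Rightarrow> 'a set \<Rightarrow> 'a set \<Rightarrow> bool" where
  "token_adj E A B \<longleftrightarrow> (\<exists>a b. E a b \<and> (A - B) \<union> (B - A) = {a, b})"

end

theory Submission
  imports Defs
begin

lemma card_diff_eq:
  assumes "finite A" "finite B" "card A = card B"
  shows "card (A - B) = card (B - A)"
  using assms by (simp add: card_Diff_subset_Int Int_commute)

lemma swap_shape:
  assumes "finite A" "finite B" "card A = card B" "(A - B) \<union> (B - A) = {a, b}" "a \<noteq> b" "a \<in> A"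
  shows "b \<notin> A \<and> b \<in> B \<and> B = insert b (A - {a})"
proof -
  have c: "card (A - B) = card (B - A)" using card_diff_eq assms by blast
  have aB: "a \<notin> B" using assms(4,6) by blast
  have bA: "b \<notin> A"
  proof
    assume "b \<in> A"
    then have e: "B - A = {}" using assms(4,6) by blast
    have AB2: "A - B = {a,b}" using assms(4) e by blast
    have "card (A - B) = 0" using c e by simp
    then show False using AB2 assms(5) by simp
  qed
  have bB: "b \<in> B" using assms(4) bA by blast
  have AB: "A - B = {a}" using assms(4,6) aB bA by blast
  have "B = insert b (A - {a})" using AB assms(4) bB aB by blast
  then show ?thesis using bA bB by blast
qed

lemma inj_aux:
  assumes "x \<in> A" "y \<notin> A" "xa \<in> A" "insert y (A - {x}) = insert ya (A - {xa})"
  shows "x = xa"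
proof (rule ccontr)
  assume "x \<noteq> xa"
  then have "x \<in> insert ya (A - {xa})" using assms(1) by blast
  then have "x \<in> insert y (A - {x})" using assms(4) by simp
  then show False using assms(1,2) by auto
qed

lemma back_aux:
  assumes sg: "simple_graph V E" and fA: "finite A" and fB: "finite B" and cc: "card A = card B"
    and ab: "E a b" "(A - B) \<union> (B - A) = {a, b}"
  shows "\<exists>a' b'. a' \<in> A \<and> b' \<in> V \<and> E a' b' \<and> b' \<notin> A \<and> B = insert b' (A - {a'})"
proof -
  have sym: "\<And>x y. E x y \<Longrightarrow> E y x" and irr: "\<And>x. \<not> E x x"
   and EV: "\<And>x y. E x y \<Longrightarrow> x \<in> V \<and> y \<in> V"
    using sg unfolding simple_graph_def by auto
  have ne: "a \<noteq> b" using ab irr by auto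
  have aV: "a \<in> V" and bV: "b \<in> V" using EV[OF ab(1)] by auto
  show ?thesis
  proof (cases "a \<in> A")
    case True
    have h: "b \<notin> A \<and> b \<in> B \<and> B = insert b (A - {a})" using swap_shape[OF fA fB cc ab(2) ne True] .
    have h1: "b \<notin> A" using h by (rule conjunct1)
    have h3: "B = insert b (A - {a})" using h by (rule conjunct2[THEN conjunct2])
    have c1: "a \<in> A \<and> b \<in> V \<and> E a b \<and> b \<notin> A \<and> B = insert b (A - {a})"
      by (intro conjI; (rule True | rule bV | rule ab(1) | rule h1 | rule h3))
    show ?thesis
      apply (rule exI[where x=a])
      apply (rule exI[where x=b])
      by (rule c1)
  next
    case False
    have bA: "b \<in> A"
    proof (rule ccontr)
      assume nb: "b \<notin> A"
      have sub: "A - B \<subseteq> {a,b}" using ab(2) by blast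
      have e: "A - B = {}"
      proof
        show "A - B \<subseteq> {}" using sub False nb by blast
      qed simp
      have c0: "card (A - B) = 0" unfolding e by simp
      have "card (B - A) = 0" using card_diff_eq[OF fA fB cc] c0 by linarith
      moreover have "B - A = {a,b}" using ab(2) e by simp
      ultimately show False by simp
    qed
    have ab2: "(A - B) \<union> (B - A) = {b, a}" using ab(2) by blast
    have h: "a \<notin> A \<and> a \<in> B \<and> B = insert a (A - {b})"
      using swap_shape[OF fA fB cc ab2 ne[symmetric] bA] .
    have eba: "E b a" using sym[OF ab(1)] .
    have h1: "a \<notin> A" using h by (rule conjunct1)
    have h3: "B = insert a (A - {b})" using h by (rule conjunct2[THEN conjunct2])
    have c1: "b \<in> A \<and> a \<in> V \<and> E b a \<and> a \<notin> A \<and> B = insert a (A - {b})"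
      by (intro conjI; (rule bA | rule aV | rule eba | rule h1 | rule h3))
    show ?thesis
      apply (rule exI[where x=b])
      apply (rule exI[where x=a])
      by (rule c1)
  qed
qed

lemma tok_deg:
  assumes sg: "simple_graph V E" and AV: "A \<subseteq> V" and cA: "card A = k"
  shows "degree (token_vertices V k) (token_adj E) A = (\<Sum>a\<in>A. card ({w\<in>V. E a w} - A))"
proof -
  have fV: "finite V" and sym: "\<And>x y. E x y \<Longrightarrow> E y x" and irr: "\<And>x. \<not> E x x"
   and EV: "\<And>x y. E x y \<Longrightarrow> x \<in> V \<and> y \<in> V"
    using sg unfolding simple_graph_def by auto
  have fA: "finite A" using fV AV finite_subset by blast
  let ?P = "Sigma A (\<lambda>a. {w\<in>V. E a w} - A)"
  let ?f = "\<lambda>p. insert (snd p) (A - {fst p})"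
  have inj: "inj_on ?f ?P"
  proof (rule inj_onI)
    fix p q assume p: "p \<in> ?P" and q: "q \<in> ?P" and e: "?f p = ?f q"
    have h: "fst p \<in> A" "snd p \<notin> A" "fst q \<in> A" "snd q \<notin> A" using p q by auto
    have e2: "insert (snd p) (A - {fst p}) = insert (snd q) (A - {fst q})" using e by simp
    have aa: "fst p = fst q" using inj_aux[OF h(1,2,3) e2] .
    have bb: "snd p = snd q"
    proof -
      have "snd p \<in> insert (snd q) (A - {fst q})" using e2 by blast
      then show ?thesis using h(2) by blast
    qed
    show "p = q" using aa bb by (rule prod_eqI)
  qed
  have img: "?f ` ?P = {B \<in> token_vertices V k. token_adj E A B}"
  proof
    show "?f ` ?P \<subseteq> {B \<in> token_vertices V k. token_adj E A B}"
    proof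
      fix B assume "B \<in> ?f ` ?P"
      then obtain p where p: "p \<in> ?P" and B: "B = insert (snd p) (A - {fst p})" by blast
      obtain a b where pab: "p = (a,b)" by (cases p)
      have ab: "a \<in> A" "b \<in> V" "E a b" "b \<notin> A" using p unfolding pab by auto
      have B': "B = insert b (A - {a})" using B unfolding pab by simp
      have "card (A - {a}) = k - 1" using ab fA cA by simp
      moreover have "card A > 0" using ab(1) fA by (auto simp: card_gt_0_iff)
      then have "k \<ge> 1" using cA by simp
      ultimately have cB: "card B = k" using B' ab fA by simp
      have BV: "B \<subseteq> V" using B' AV ab by auto
      have "(A - B) \<union> (B - A) = {a, b}" using B' ab by auto
      then show "B \<in> {B \<in> token_vertices V k. token_adj E A B}"
        unfolding token_vertices_def token_adj_def using cB BV ab(3) by blast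
    qed
    show "{B \<in> token_vertices V k. token_adj E A B} \<subseteq> ?f ` ?P"
    proof
      fix B assume "B \<in> {B \<in> token_vertices V k. token_adj E A B}"
      then have BV: "B \<subseteq> V" "card B = k" and "\<exists>a b. E a b \<and> (A - B) \<union> (B - A) = {a, b}"
        unfolding token_vertices_def token_adj_def by auto
      then obtain a b where ab: "E a b" "(A - B) \<union> (B - A) = {a, b}" by blast
      have fB: "finite B" using BV fV finite_subset by blast
      have cc: "card A = card B" using cA BV by simp
      obtain a' b' where h: "a' \<in> A" "b' \<in> V" "E a' b'" "b' \<notin> A" "B = insert b' (A - {a'})"
        using back_aux[OF sg fA fB cc ab] by blast
      have hp: "(a',b') \<in> ?P" using h by simp
      have "?f (a',b') \<in> ?f ` ?P" using hp by (rule imageI)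
      moreover have "?f (a',b') = B" using h(5) by simp
      ultimately show "B \<in> ?f ` ?P" by (simp only:)
    qed
  qed
  have "degree (token_vertices V k) (token_adj E) A = card (?f ` ?P)"
    unfolding degree_def img by simp
  also have "\<dots> = card ?P" using card_image[OF inj] .
  also have "\<dots> = (\<Sum>a\<in>A. card ({w\<in>V. E a w} - A))"
    using fA fV by (subst card_SigmaI) auto
  finally show ?thesis .
qed

lemma deg_insert:
  assumes sg: "simple_graph V E" and SV: "S \<subseteq> V" and xV: "x \<in> V" and xS: "x \<notin> S"
    and cS: "card S + 1 = k"
  shows "degree (token_vertices V k) (token_adj E) (insert x S) + 2 * card ({w\<in>V. E x w} \<inter> S)
       = (\<Sum>a\<in>S. card ({w\<in>V. E a w} - S)) + card {w\<in>V. E x w}"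
proof -
  have fV: "finite V" and sym: "\<And>x y. E x y \<Longrightarrow> E y x" and irr: "\<And>x. \<not> E x x"
   and EV: "\<And>x y. E x y \<Longrightarrow> x \<in> V \<and> y \<in> V"
    using sg unfolding simple_graph_def by auto
  have fS: "finite S" using fV SV finite_subset by blast
  have cI: "card (insert x S) = k" using fS xS cS by simp
  have "degree (token_vertices V k) (token_adj E) (insert x S)
     = (\<Sum>a\<in>insert x S. card ({w\<in>V. E a w} - insert x S))"
    using tok_deg[OF sg _ cI] SV xV by auto
  also have "\<dots> = card ({w\<in>V. E x w} - insert x S) + (\<Sum>a\<in>S. card ({w\<in>V. E a w} - insert x S))"
    using fS xS by simp
  finally have d1: "degree (token_vertices V k) (token_adj E) (insert x S)
     = card ({w\<in>V. E x w} - insert x S) + (\<Sum>a\<in>S. card ({w\<in>V. E a w} - insert x S))" .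
  have "{w\<in>V. E x w} - insert x S = {w\<in>V. E x w} - S" using irr by auto
  then have e1: "card ({w\<in>V. E x w} - insert x S) = card ({w\<in>V. E x w} - S)" by simp
  have e2: "card {w\<in>V. E x w} = card ({w\<in>V. E x w} \<inter> S) + card ({w\<in>V. E x w} - S)"
    using fV by (intro card_Int_Diff) auto
  have e3: "card ({w\<in>V. E a w} - S) = card ({w\<in>V. E a w} - insert x S) + of_bool (E a x)"
    if "a \<in> S" for a
  proof (cases "E a x")
    case True
    then have "x \<in> {w\<in>V. E a w} - S" using xV xS by auto
    then have "card ({w\<in>V. E a w} - S) = Suc (card ({w\<in>V. E a w} - S - {x}))"
      using fV by (intro card.remove) auto
    moreover have "{w\<in>V. E a w} - S - {x} = {w\<in>V. E a w} - insert x S" by auto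
    ultimately show ?thesis using True by simp
  next
    case False
    then have "{w\<in>V. E a w} - S = {w\<in>V. E a w} - insert x S" by auto
    then show ?thesis using False by simp
  qed
  have e4: "(\<Sum>a\<in>S. card ({w\<in>V. E a w} - S))
      = (\<Sum>a\<in>S. card ({w\<in>V. E a w} - insert x S)) + (\<Sum>a\<in>S. (of_bool (E a x) :: nat))"
    using e3 by (simp add: sum.distrib)
  have "(\<Sum>a\<in>S. (of_bool (E a x) :: nat)) = card (S \<inter> {a. E a x})"
    using fS by simp
  also have "S \<inter> {a. E a x} = {w\<in>V. E x w} \<inter> S" using SV sym by auto
  finally have e5: "(\<Sum>a\<in>S. (of_bool (E a x) :: nat)) = card ({w\<in>V. E x w} \<inter> S)" .
  show ?thesis using d1 e1 e2 e4 e5 by linarith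
qed

lemma card_Int_insert':
  assumes "finite R" "u \<notin> R"
  shows "card (N \<inter> insert u R) = card (N \<inter> R) + of_bool (u \<in> N)"
proof (cases "u \<in> N")
  case True
  then have "N \<inter> insert u R = insert u (N \<inter> R)" by blast
  moreover have "u \<notin> N \<inter> R" using assms(2) by blast
  ultimately show ?thesis using assms(1) True by simp
next
  case False
  then have "N \<inter> insert u R = N \<inter> R" by blast
  then show ?thesis using False by simp
qed

theorem theorem3:
  fixes V :: "'a set" and E :: "'a \<Rightarrow> 'a \<Rightarrow> bool" and k :: nat
  assumes "simple_graph V E"
    and "regular V E"
    and "\<not> edgeless V E"
    and "\<not> complete V E"
    and "2 \<le> k" and "k + 2 \<le> card V"
  shows "\<not> regular (token_vertices V k) (token_adj E)"
proof
  assume regF: "regular (token_vertices V k) (token_adj E)"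
  obtain dF where dF: "\<forall>A\<in>token_vertices V k. degree (token_vertices V k) (token_adj E) A = dF"
    using regF unfolding regular_def by blast
  obtain d where d: "\<forall>v\<in>V. degree V E v = d" using assms(2) unfolding regular_def by blast
  have fV: "finite V" and sym: "\<And>x y. E x y \<Longrightarrow> E y x" and irr: "\<And>x. \<not> E x x"
   and EV: "\<And>x y. E x y \<Longrightarrow> x \<in> V \<and> y \<in> V"
    using assms(1) unfolding simple_graph_def by auto
  define N where "N = (\<lambda>x. {w\<in>V. E x w})"
  have L2: "card (N x \<inter> S) = card (N y \<inter> S)"
    if xV: "x \<in> V" and yV: "y \<in> V" and S: "S \<subseteq> V - {x,y}" and cS: "card S + 1 = k" for x y S
  proof -
    have SV: "S \<subseteq> V" and xS: "x \<notin> S" and yS: "y \<notin> S" using S by auto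
    have fS: "finite S" using fV SV finite_subset by blast
    note hx = deg_insert[OF assms(1) SV xV xS cS]
    note hy = deg_insert[OF assms(1) SV yV yS cS]
    have "insert x S \<in> token_vertices V k" "insert y S \<in> token_vertices V k"
      unfolding token_vertices_def using SV xV yV xS yS fS cS by auto
    then have "degree (token_vertices V k) (token_adj E) (insert x S) = dF"
      "degree (token_vertices V k) (token_adj E) (insert y S) = dF" using dF by auto
    moreover have "card {w\<in>V. E x w} = d" "card {w\<in>V. E y w} = d"
      using d xV yV unfolding degree_def by auto
    ultimately show ?thesis using hx hy unfolding N_def by linarith
  qed
  have L3: "of_bool (E x u) + of_bool (E y v) = (of_bool (E y u) + of_bool (E x v) :: nat)"
    if xV: "x \<in> V" and yV: "y \<in> V" and xy: "x \<noteq> y" and uW: "u \<in> V - {x,y}"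
      and vW: "v \<in> V - {x,y}" and uv: "u \<noteq> v" for x y u v
  proof -
    have "card {x,y,u,v} = 4" using xy uW vW uv by auto
    moreover have "{x,y,u,v} \<subseteq> V" using xV yV uW vW by auto
    ultimately have "card (V - {x,y,u,v}) = card V - 4" using fV
      by (simp add: card_Diff_subset finite_subset)
    then have "k - 2 \<le> card (V - {x,y,u,v})" using assms(6) by linarith
    then obtain R where R: "R \<subseteq> V - {x,y,u,v}" "card R = k - 2" "finite R"
      by (meson obtain_subset_with_card_n)
    have uR: "u \<notin> R" and vR: "v \<notin> R" using R by auto
    have c1: "card (insert u R) + 1 = k" "card (insert v R) + 1 = k"
      using R assms(5) uR vR by auto
    have s1: "insert u R \<subseteq> V - {x,y}" "insert v R \<subseteq> V - {x,y}" using R uW vW by auto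
    note q1 = L2[OF xV yV s1(1) c1(1)]
    note q2 = L2[OF xV yV s1(2) c1(2)]
    have o: "of_bool (u \<in> N x) = (of_bool (E x u) :: nat)" "of_bool (u \<in> N y) = (of_bool (E y u) :: nat)"
      "of_bool (v \<in> N x) = (of_bool (E x v) :: nat)" "of_bool (v \<in> N y) = (of_bool (E y v) :: nat)"
      unfolding N_def using uW vW by auto
    note i1 = card_Int_insert'[OF R(3) uR, of "N x"] card_Int_insert'[OF R(3) uR, of "N y"]
      card_Int_insert'[OF R(3) vR, of "N x"] card_Int_insert'[OF R(3) vR, of "N y"]
    show ?thesis using q1 q2 i1 o by linarith
  qed
  have half: False if xV: "x \<in> V" and yV: "y \<in> V" and xy: "x \<noteq> y" and uW: "u \<in> V - {x,y}"
      and exu: "E x u" and eyu: "\<not> E y u" for x y u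
  proof -
    have all: "E x v \<and> \<not> E y v" if vW: "v \<in> V - {x,y}" for v
    proof (cases "v = u")
      case True then show ?thesis using exu eyu by simp
    next
      case False
      from L3[OF xV yV xy uW vW False[symmetric]] exu eyu show ?thesis
        by (cases "E x v"; cases "E y v") auto
    qed
    have "card (V - {x,y}) = card V - 2" using xV yV xy fV by (simp add: card_Diff_subset)
    then have "k - 1 \<le> card (V - {x,y})" using assms(6) by linarith
    then obtain S where S: "S \<subseteq> V - {x,y}" "card S = k - 1" "finite S"
      by (meson obtain_subset_with_card_n)
    have cS: "card S + 1 = k" using S assms(5) by auto
    have "N x \<inter> S = S" "N y \<inter> S = {}" using all S unfolding N_def by auto
    then show False using L2[OF xV yV S(1) cS] S assms(5) by simp
  qed
  have twin: "E x u \<longleftrightarrow> E y u"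
    if xV: "x \<in> V" and yV: "y \<in> V" and xy: "x \<noteq> y" and uW: "u \<in> V - {x,y}" for x y u
  proof -
    have uW': "u \<in> V - {y,x}" using uW by auto
    show ?thesis using half[OF xV yV xy uW] half[OF yV xV xy[symmetric] uW'] by blast
  qed
  obtain x y where xy: "x \<in> V" "y \<in> V" "E x y" using assms(3) unfolding edgeless_def by blast
  have xney: "x \<noteq> y" using xy irr by auto
  obtain u v where uv: "u \<in> V" "v \<in> V" "u \<noteq> v" "\<not> E u v" using assms(4) unfolding complete_def by blast
  have adjx: "E z x" if "z \<in> V" "z \<noteq> x" for z
  proof (cases "z = y")
    case True then show ?thesis using sym xy by auto
  next
    case False
    have "E y x \<longleftrightarrow> E z x" using twin[of y z x] that False xy xney by auto
    then show ?thesis using sym xy by auto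
  qed
  have adjy: "E z y" if "z \<in> V" "z \<noteq> y" for z
  proof (cases "z = x")
    case True then show ?thesis using xy by auto
  next
    case False
    have "E x y \<longleftrightarrow> E z y" using twin[of x z y] that False xy xney by auto
    then show ?thesis using xy by auto
  qed
  show False
  proof (cases "u \<in> {x,y} \<or> v \<in> {x,y}")
    case True
    then show False using adjx adjy sym uv by blast
  next
    case False
    have "E x v \<longleftrightarrow> E u v" using twin[of x u v] False uv xy by auto
    moreover have "E x v" using adjx[of v] sym False uv by auto
    ultimately show False using uv by simp
  qed
qed

end
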